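(* Let $k$ be a field of characteristic $2$ and let $n \geq 1$. Let $\mathfrak{h}_n$ be the Heisenberg Lie algebra of dimension $2n+1$ over $k$. Then \[ \sum_{i \geq 0} \dim_k H_{i}(\mathfrak{h}_n;k)\, t^i = \frac{(1+t^3)(1+t)^{2n} + (t+t^2)(2t)^n}{1+t^2}, \] where the right-hand side, computed with integer coefficients, is a polynomial in $t$.
   Context: The Heisenberg Lie algebra $\mathfrak{h}_n$ over $k$ is the $k$-vector space with basis $\{z, x_1,\dots,x_n, y_1,\dots,y_n\}$ whose only nonzero Lie brackets of basis elements are $[x_i,y_i] = -[y_i,x_i] = z$ for $i=1,\dots,n$. $H_i(\mathfrak{h}_n;k)$ denotes the $i$-th Lie algebra homology of $\mathfrak{h}_n$ with trivial coefficients in $k$, i.e. the $i$-th homology of the Chevalley–Eilenberg complex $\cdots \to \bigwedge^{i}\mathfrak{h}_n \to \bigwedge^{i-1}\mathfrak{h}_n \to \cdots \to \bigwedge^1 \mathfrak{h}_n \to \bigwedge^0\mathfrak{h}_n = k \to 0$ with differential $d(w_1\wedge\cdots\wedge w_p) = \sum_{i<j} (-1)^{i+j}[w_i,w_j]\wedge w_1\wedge\cdots\wedge\widehat{w_i}\wedge\cdots\wedge\widehat{w_j}\wedge\cdots\wedge w_p$ (so $H_0 = k$). *)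

theory Defs
  imports "HOL-Library.Function_Algebras" "HOL-Computational_Algebra.Formal_Power_Series"
begin

text \<open>Basis of the Heisenberg Lie algebra h_n indexed by {0..2n}:
  index 0 is z, index i (1 <= i <= n) is x_i, index n+i is y_i.
  This ordering of the basis is used to form the standard basis
  w_S = w_{s_1} /\ ... /\ w_{s_p} (s_1 < ... < s_p) of the p-th exterior power,
  so a p-chain is a function from p-subsets of {0..2n} to k.\<close>

definition heis_idx :: "nat \<Rightarrow> nat set" where
  "heis_idx n = {0..2*n}"

text \<open>Structure constants: [w_a, w_b] = sum_c heis_br n a b c * w_c.\<close>
definition heis_br :: "nat \<Rightarrow> nat \<Rightarrow> nat \<Rightarrow> nat \<Rightarrow> 'k::field" where
  "heis_br n a b c =
     (if c = 0 \<and> 1 \<le> a \<and> a \<le> n \<and> b = a + n then 1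
      else if c = 0 \<and> 1 \<le> b \<and> b \<le> n \<and> a = b + n then -1
      else 0)"

definition fscale :: "'k::field \<Rightarrow> ('a \<Rightarrow> 'k) \<Rightarrow> ('a \<Rightarrow> 'k)" where
  "fscale c f = (\<lambda>x. c * f x)"

text \<open>Coordinates of w_c /\ w_R in the standard basis.\<close>
definition wedge1 :: "nat \<Rightarrow> nat set \<Rightarrow> nat set \<Rightarrow> 'k::field" where
  "wedge1 c R = (\<lambda>T. if c \<in> R then 0
      else if T = insert c R then (-1) ^ card {r\<in>R. r < c} else 0)"

definition pos :: "nat set \<Rightarrow> nat \<Rightarrow> nat" where
  "pos S a = card {t\<in>S. t < a} + 1"

text \<open>Chevalley--Eilenberg differential of the basis vector w_S:
  d(w_S) = sum_{i<j} (-1)^(i+j) [w_{s_i}, w_{s_j}] /\ w_{S - {s_i,s_j}}.\<close>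
definition ce_d_basis :: "nat \<Rightarrow> nat set \<Rightarrow> nat set \<Rightarrow> 'k::field" where
  "ce_d_basis n S = (\<lambda>T. \<Sum>a\<in>S. \<Sum>b\<in>S.
      if a < b then (-1) ^ (pos S a + pos S b) *
        (\<Sum>c\<in>heis_idx n. heis_br n a b c * wedge1 c (S - {a, b}) T)
      else 0)"

definition ce_basis :: "nat \<Rightarrow> nat \<Rightarrow> nat set set" where
  "ce_basis n p = {S. S \<subseteq> heis_idx n \<and> card S = p}"

definition ce_chains :: "nat \<Rightarrow> nat \<Rightarrow> (nat set \<Rightarrow> 'k::field) set" where
  "ce_chains n p = {f. \<forall>S. f S \<noteq> 0 \<longrightarrow> S \<in> ce_basis n p}"

definition ce_d :: "nat \<Rightarrow> nat \<Rightarrow> (nat set \<Rightarrow> 'k::field) \<Rightarrow> (nat set \<Rightarrow> 'k)" where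
  "ce_d n p f = (\<lambda>T. \<Sum>S\<in>ce_basis n p. f S * ce_d_basis n S T)"

definition heis_homology_dim :: "'k::field itself \<Rightarrow> nat \<Rightarrow> nat \<Rightarrow> nat" where
  "heis_homology_dim _ n i =
     vector_space.dim (fscale :: 'k \<Rightarrow> _) {f \<in> (ce_chains n i :: (nat set \<Rightarrow> 'k) set). ce_d n i f = 0}
     - vector_space.dim (fscale :: 'k \<Rightarrow> _) (ce_d n (Suc i) ` (ce_chains n (Suc i) :: (nat set \<Rightarrow> 'k) set))"

end

theory Submission
  imports Defs
begin


lemma char2_one: assumes "CHAR('k::field) = 2" shows "(1::'k) + 1 = 0"
proof -
  have "of_nat CHAR('k) = (0::'k)" by simp
  then show ?thesis using assms by (simp add: one_add_one)
qed

lemma char2_neg: assumes "CHAR('k::field) = 2" shows "- (1::'k) = 1"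
  using char2_one[OF assms] by (simp add: add_eq_0_iff)

lemma char2_pow: assumes "CHAR('k::field) = 2" shows "(- (1::'k)) ^ m = 1"
  by (simp only: char2_neg[OF assms] power_one)

lemma char2_double: assumes "CHAR('k::field) = 2" shows "(x::'k) + x = 0"
proof -
  have "x + x = x * (1 + 1)" by (simp add: algebra_simps)
  then show ?thesis using char2_one[OF assms] by simp
qed

lemma sum_fun_apply: "(\<Sum>x\<in>A. f x) y = (\<Sum>x\<in>A. (f x) y)"
  by (induction A rule: infinite_finite_induct) auto

lemma sum_unique_ind:
  assumes "finite A" "\<And>a b. a \<in> A \<Longrightarrow> b \<in> A \<Longrightarrow> P a \<Longrightarrow> P b \<Longrightarrow> a = b"
  shows "(\<Sum>a\<in>A. if P a then (1::'a::semiring_1) else 0) = (if \<exists>a\<in>A. P a then 1 else 0)"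
proof (cases "\<exists>a\<in>A. P a")
  case True
  then obtain a0 where a0: "a0 \<in> A" "P a0" by blast
  have "(\<Sum>a\<in>A. if P a then (1::'a) else 0) = (\<Sum>a\<in>A. if a = a0 then 1 else 0)"
    by (rule sum.cong) (use assms a0 in auto)
  also have "\<dots> = 1" using a0 assms(1) by simp
  finally show ?thesis using True by simp
next
  case False
  then show ?thesis by simp
qed

definition bal :: "nat \<Rightarrow> nat set \<Rightarrow> nat \<Rightarrow> bool" where
  "bal n S i \<longleftrightarrow> (i \<in> S \<longleftrightarrow> i + n \<in> S)"
definition isfree :: "nat \<Rightarrow> nat set \<Rightarrow> bool" where
  "isfree n S \<longleftrightarrow> (\<forall>i. 1 \<le> i \<and> i \<le> n \<longrightarrow> \<not> bal n S i)"
definition vv :: "nat \<Rightarrow> nat set \<Rightarrow> nat" where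
  "vv n S = (LEAST i. 1 \<le> i \<and> i \<le> n \<and> bal n S i)"
definition headed :: "nat \<Rightarrow> nat set \<Rightarrow> bool" where
  "headed n S \<longleftrightarrow> 0 \<notin> S \<and> \<not> isfree n S \<and> vv n S \<in> S"
definition nh :: "nat \<Rightarrow> nat set \<Rightarrow> bool" where
  "nh n S \<longleftrightarrow> 0 \<notin> S \<and> \<not> isfree n S \<and> vv n S \<notin> S"
definition prs :: "nat \<Rightarrow> nat \<Rightarrow> nat set" where
  "prs n i = {i, i + n}"
definition Pairs :: "nat \<Rightarrow> nat set \<Rightarrow> nat set" where
  "Pairs n S = {i. 1 \<le> i \<and> i \<le> n \<and> i \<in> S \<and> i + n \<in> S}"
definition ee :: "nat \<Rightarrow> nat set \<Rightarrow> nat set \<Rightarrow> 'k::field" where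
  "ee n T U = (if 0 \<notin> T \<and> (\<exists>i\<in>Pairs n T. U = insert 0 (T - prs n i)) then 1 else 0)"

lemma heis_br_0: "c \<noteq> 0 \<Longrightarrow> heis_br n a b c = 0"
  by (simp add: heis_br_def)

lemma ce_d_basis_char2:
  assumes ch: "CHAR('k::field) = 2" and n: "n \<ge> 1" and fin: "finite S"
  shows "(ce_d_basis n S :: nat set \<Rightarrow> 'k) = ee n S"
proof
  fix U
  have inner: "(\<Sum>c\<in>heis_idx n. heis_br n a b c * wedge1 c R U) =
      (heis_br n a b 0 * wedge1 0 R U :: 'k)" for a b R
  proof -
    have "0 \<in> heis_idx n" by (simp add: heis_idx_def)
    have "(\<Sum>c\<in>heis_idx n. heis_br n a b c * wedge1 c R U) =
       heis_br n a b 0 * wedge1 0 R U + (\<Sum>c\<in>heis_idx n - {0}. heis_br n a b c * wedge1 c R U :: 'k)"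
      using sum.remove[of "heis_idx n" 0 "\<lambda>c. heis_br n a b c * wedge1 c R U"] by (simp add: heis_idx_def)
    also have "(\<Sum>c\<in>heis_idx n - {0}. heis_br n a b c * wedge1 c R U :: 'k) = 0"
      by (rule sum.neutral) (simp add: heis_br_0)
    finally show ?thesis by simp
  qed
  have summand: "(if a < b then (-1) ^ (pos S a + pos S b) *
        (\<Sum>c\<in>heis_idx n. heis_br n a b c * wedge1 c (S - {a, b}) U) else 0) =
      (if b = a + n then (if 1 \<le> a \<and> a \<le> n \<and> 0 \<notin> S \<and> U = insert 0 (S - {a, a+n}) then 1 else 0) else (0::'k))"
    for a b
  proof -
    have hb: "a < b \<Longrightarrow> heis_br n a b 0 = (if 1 \<le> a \<and> a \<le> n \<and> b = a+n then (1::'k) else 0)"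
      by (auto simp: heis_br_def)
    have w0: "wedge1 0 R U = (if 0 \<in> R then 0 else if U = insert 0 R then (1::'k) else 0)" for R
      by (simp add: wedge1_def)
    show ?thesis
    proof (cases "a < b")
      case False
      then have "b \<noteq> a + n" using n by auto
      then show ?thesis using False by simp
    next
      case True
      show ?thesis
      proof (cases "1 \<le> a \<and> a \<le> n \<and> b = a+n")
        case c: True
        then have z: "(0 \<in> S - {a, b}) = (0 \<in> S)" by auto
        have h1: "heis_br n a b 0 = (1::'k)" using hb[OF True] c by simp
        show ?thesis unfolding inner char2_pow[OF ch] using True c
          by (simp only: h1 w0 z if_True mult_1 mult_1_right) (use h1 in \<open>simp add: c\<close>)
      next
        case c: False
        show ?thesis unfolding inner using True c by (simp add: hb)
      qed
    qed
  qed
  have s2: "(\<Sum>b\<in>S. (if b = a + n then (if 1 \<le> a \<and> a \<le> n \<and> 0 \<notin> S \<and> U = insert 0 (S - {a, a+n}) then 1 else 0) else (0::'k)))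
     = (if a + n \<in> S \<and> 1 \<le> a \<and> a \<le> n \<and> 0 \<notin> S \<and> U = insert 0 (S - {a, a+n}) then 1 else 0)" for a
    using fin by (simp add: sum.delta')
  have uniq: "a = a'" if "a \<in> S" "a' \<in> S"
    "a + n \<in> S \<and> 1 \<le> a \<and> a \<le> n \<and> 0 \<notin> S \<and> U = insert 0 (S - {a, a+n})"
    "a' + n \<in> S \<and> 1 \<le> a' \<and> a' \<le> n \<and> 0 \<notin> S \<and> U = insert 0 (S - {a', a'+n})" for a a'
  proof -
    have "S - {a, a+n} = S - {a', a'+n}"
    proof -
      have "S - {a, a+n} = U - {0}" using that(3) by auto
      moreover have "S - {a', a'+n} = U - {0}" using that(4) by auto
      ultimately show ?thesis by simp
    qed
    moreover have "a' \<noteq> a + n" using that by auto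
    ultimately show ?thesis using that by blast
  qed
  have "ce_d_basis n S U = (\<Sum>a\<in>S. if a + n \<in> S \<and> 1 \<le> a \<and> a \<le> n \<and> 0 \<notin> S \<and> U = insert 0 (S - {a, a+n}) then 1 else (0::'k))"
    unfolding ce_d_basis_def summand s2 by simp
  also have "\<dots> = (if \<exists>a\<in>S. a + n \<in> S \<and> 1 \<le> a \<and> a \<le> n \<and> 0 \<notin> S \<and> U = insert 0 (S - {a, a+n}) then 1 else 0)"
    by (rule sum_unique_ind[OF fin]) (rule uniq)
  also have "\<dots> = ee n S U"
    unfolding ee_def Pairs_def prs_def by (rule if_cong) auto
  finally show "(ce_d_basis n S U :: 'k) = ee n S U" .
qed




lemma vv_props:
  assumes "\<not> isfree n S"
  shows "1 \<le> vv n S" "vv n S \<le> n" "bal n S (vv n S)"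
    "\<And>j. 1 \<le> j \<Longrightarrow> j < vv n S \<Longrightarrow> \<not> bal n S j"
proof -
  obtain i where i: "1 \<le> i \<and> i \<le> n \<and> bal n S i" using assms unfolding isfree_def by blast
  have P: "1 \<le> vv n S \<and> vv n S \<le> n \<and> bal n S (vv n S)"
    unfolding vv_def by (rule LeastI[of _ i]) (use i in auto)
  then show "1 \<le> vv n S" "vv n S \<le> n" "bal n S (vv n S)" by auto
  fix j assume j: "1 \<le> j" "j < vv n S"
  show "\<not> bal n S j"
  proof
    assume b: "bal n S j"
    have "j \<le> n" using j P by auto
    then have "vv n S \<le> j" unfolding vv_def by (intro Least_le) (use j b in auto)
    then show False using j by auto
  qed
qed

lemma vv_le: "\<not> isfree n S \<Longrightarrow> 1 \<le> i \<Longrightarrow> i \<le> n \<Longrightarrow> bal n S i \<Longrightarrow> vv n S \<le> i"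
  unfolding vv_def by (intro Least_le) auto

lemma bal_upd:
  assumes "1 \<le> i" "i \<le> n" "1 \<le> j" "j \<le> n"
  shows "bal n (S \<union> prs n i) j = (if j = i then True else bal n S j)"
    "bal n (S - prs n i) j = (if j = i then True else bal n S j)"
  using assms by (auto simp: bal_def prs_def)

lemma vv_upd:
  assumes nf: "\<not> isfree n S" and i: "1 \<le> i" "i \<le> n" "vv n S \<le> i"
    and S': "S' = S \<union> prs n i \<or> S' = S - prs n i"
  shows "vv n S' = vv n S" "\<not> isfree n S'"
proof -
  note V = vv_props[OF nf]
  have bS': "bal n S' j = (if j = i then True else bal n S j)" if "1 \<le> j" "j \<le> n" for j
    using S' bal_upd[OF i(1,2) that] by auto
  have b: "bal n S' (vv n S)" using bS' V by auto
  show "\<not> isfree n S'" using b V unfolding isfree_def by auto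
  show "vv n S' = vv n S"
    unfolding vv_def[of n S']
  proof (rule Least_equality)
    show "1 \<le> vv n S \<and> vv n S \<le> n \<and> bal n S' (vv n S)" using b V by auto
    fix y assume y: "1 \<le> y \<and> y \<le> n \<and> bal n S' y"
    show "vv n S \<le> y"
    proof (rule ccontr)
      assume "\<not> vv n S \<le> y"
      then have "y < vv n S" by simp
      then have "y \<noteq> i" "\<not> bal n S y" using i V(4)[of y] y by auto
      then show False using bS'[of y] y by auto
    qed
  qed
qed



lemma Pairs_sub: "Pairs n S \<subseteq> {1..n}" by (auto simp: Pairs_def)
lemma finite_Pairs[simp]: "finite (Pairs n S)" by (rule finite_subset[OF Pairs_sub]) simp

lemma Pairs_bal: "i \<in> Pairs n S \<Longrightarrow> bal n S i \<and> 1 \<le> i \<and> i \<le> n \<and> i \<in> S \<and> i + n \<in> S"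
  by (auto simp: Pairs_def bal_def)

lemma free_Pairs: "isfree n S \<Longrightarrow> Pairs n S = {}"
  by (auto simp: isfree_def Pairs_def bal_def)

lemma ee_zero: "0 \<in> T \<or> isfree n T \<Longrightarrow> ee n T = (\<lambda>U. 0)"
proof
  fix U assume a: "0 \<in> T \<or> isfree n T"
  show "ee n T U = 0"
  proof (cases "0 \<in> T")
    case True then show ?thesis by (simp add: ee_def)
  next
    case False then have "Pairs n T = {}" using a free_Pairs by blast
    then show ?thesis by (simp add: ee_def)
  qed
qed

lemma ins0_inj:
  assumes "0 \<notin> A" "0 \<notin> B" "insert 0 A = insert 0 B" shows "A = B"
proof -
  have "A = insert 0 A - {0}" using assms(1) by simp
  also have "\<dots> = insert 0 B - {0}" using assms(3) by simp
  also have "\<dots> = B" using assms(2) by simp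
  finally show ?thesis .
qed

lemma pairs_minus_inj:
  assumes "i \<in> Pairs n T" "j \<in> Pairs n T" "T - prs n i = T - prs n j" "n \<ge> 1"
  shows "i = j"
proof (rule ccontr)
  assume ne: "i \<noteq> j"
  have "i \<le> n" "1 \<le> j" "i \<in> T" using Pairs_bal[OF assms(1)] Pairs_bal[OF assms(2)] by auto
  then have "i \<noteq> j + n" by simp
  then have "i \<notin> prs n j" using ne by (simp add: prs_def)
  then have "i \<in> T - prs n j" using \<open>i \<in> T\<close> by simp
  then have "i \<in> T - prs n i" using assms(3) by simp
  then show False by (simp add: prs_def)
qed

lemma ee_sum:
  assumes "0 \<notin> T" "n \<ge> 1"
  shows "ee n T U = (\<Sum>j\<in>Pairs n T. if U = insert 0 (T - prs n j) then (1::'k::field) else 0)"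
proof -
  have uq: "a = b" if ab: "a \<in> Pairs n T" "b \<in> Pairs n T" "U = insert 0 (T - prs n a)" "U = insert 0 (T - prs n b)" for a b
  proof -
    have e: "insert 0 (T - prs n a) = insert 0 (T - prs n b)"
      using ab(3) ab(4) by (rule subst)
    have "T - prs n a = T - prs n b"
      by (rule ins0_inj[OF _ _ e]) (use assms(1) in auto)
    then show "a = b" by (rule pairs_minus_inj[OF ab(1,2) _ assms(2)])
  qed
  have "(\<Sum>j\<in>Pairs n T. if U = insert 0 (T - prs n j) then (1::'k) else 0) =
     (if \<exists>j\<in>Pairs n T. U = insert 0 (T - prs n j) then 1 else 0)"
    by (rule sum_unique_ind[OF finite_Pairs uq])
  then show ?thesis using assms by (simp add: ee_def)
qed

lemma sym_double_sum:
  assumes ch: "CHAR('k::field) = 2" and fin: "finite P" and sym: "\<And>i j. h i j = h j i"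
  shows "(\<Sum>i\<in>P. \<Sum>j\<in>P - {i}. h i j) = (0::'k)"
  using fin
proof (induction P rule: finite_induct)
  case empty then show ?case by simp
next
  case (insert a P)
  have eq: "insert a P - {i} = insert a (P - {i})" if "i \<in> P" for i using that insert by auto
  have "(\<Sum>i\<in>insert a P. \<Sum>j\<in>insert a P - {i}. h i j) =
     (\<Sum>j\<in>P. h a j) + (\<Sum>i\<in>P. \<Sum>j\<in>insert a P - {i}. h i j)"
    using insert by (simp add: sum.insert)
  also have "(\<Sum>i\<in>P. \<Sum>j\<in>insert a P - {i}. h i j) = (\<Sum>i\<in>P. h i a + (\<Sum>j\<in>P - {i}. h i j))"
    by (rule sum.cong) (use insert in \<open>auto simp: eq\<close>)
  also have "\<dots> = (\<Sum>i\<in>P. h a i) + 0"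
    using insert by (simp add: sum.distrib sym)
  finally show ?case using char2_double[OF ch] by simp
qed




definition lft :: "nat \<Rightarrow> nat set \<Rightarrow> nat \<Rightarrow> nat set" where
  "lft n S i = (S \<union> prs n (vv n S)) - prs n i"
definition ll :: "nat \<Rightarrow> nat set \<Rightarrow> nat set" where
  "ll n T = insert 0 (T - prs n (vv n T))"

lemma headed_props:
  assumes "headed n T"
  shows "vv n T \<in> Pairs n T" "prs n (vv n T) \<subseteq> T" "\<not> isfree n T" "0 \<notin> T"
  using assms vv_props[of n T] by (auto simp: headed_def Pairs_def bal_def prs_def)

lemma headed_tri:
  assumes h: "headed n T" and h': "headed n T'" and n: "n \<ge> 1"
  shows "(ee n T' (ll n T) :: 'k::field) = (if T' = T then 1 else 0)"
proof (cases "T' = T")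
  case True
  then show ?thesis using headed_props[OF h] by (auto simp: ee_def ll_def)
next
  case False
  define v where "v = vv n T"
  define v' where "v' = vv n T'"
  note HT = headed_props[OF h, folded v_def] and HT' = headed_props[OF h', folded v'_def]
  have "\<not> (\<exists>i\<in>Pairs n T'. ll n T = insert 0 (T' - prs n i))"
  proof
    assume "\<exists>i\<in>Pairs n T'. ll n T = insert 0 (T' - prs n i)"
    then obtain i where i1: "i \<in> Pairs n T'" and i2: "ll n T = insert 0 (T' - prs n i)"
      by blast
    have i3: "insert 0 (T - prs n v) = insert 0 (T' - prs n i)"
      using i2 unfolding ll_def v_def .
    note i = i1 i3
    have eq: "T - prs n v = T' - prs n i"
      by (rule ins0_inj[OF _ _ i3]) (use HT(4) HT'(4) in auto)
    have "vv n (T - prs n v) = v"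
      using vv_upd(1)[OF HT(3), of v "T - prs n v"] vv_props[OF HT(3)] v_def by auto
    moreover have "vv n (T' - prs n i) = v'"
      using vv_upd(1)[OF HT'(3), of i "T' - prs n i"] Pairs_bal[OF i(1)] vv_le[OF HT'(3), of i]
        v'_def by auto
    ultimately have vv': "v = v'" using eq by simp
    show False
    proof (cases "i = v'")
      case True
      have "T = (T - prs n v) \<union> prs n v" using HT(2) by blast
      also have "\<dots> = (T' - prs n v') \<union> prs n v'" using eq True vv' by simp
      also have "\<dots> = T'" using HT'(2) by blast
      finally have "T = T'" .
      then show False using False by simp
    next
      case ne: False
      have "v' \<in> T'" using HT'(1) Pairs_bal by blast
      moreover have "v' \<le> n" using HT'(1) Pairs_bal by blast
      ultimately have "v' \<in> T' - prs n i" using ne Pairs_bal[OF i(1)] by (auto simp: prs_def)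
      then show False using eq vv' by (auto simp: prs_def)
    qed
  qed
  then show ?thesis using False by (auto simp: ee_def)
qed

locale nhS =
  fixes n :: nat and S :: "nat set"
  assumes n: "n \<ge> 1" and nhS: "nh n S"
begin

definition v where "v = vv n S"

lemma basic: "0 \<notin> S" "\<not> isfree n S" "v \<notin> S" "v + n \<notin> S" "1 \<le> v" "v \<le> n"
  using nhS vv_props[of n S] unfolding nh_def v_def bal_def by auto

lemma pi: assumes "i \<in> Pairs n S" shows "v < i" "i \<le> n" "i \<in> S" "i + n \<in> S" "1 \<le> i"
proof -
  show "i \<le> n" "i \<in> S" "i + n \<in> S" "1 \<le> i" using Pairs_bal[OF assms] by auto
  have "v \<le> i" using vv_le[OF basic(2)] Pairs_bal[OF assms] v_def by auto
  then show "v < i" using basic(3) \<open>i \<in> S\<close> by (cases "v = i") auto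
qed

lemma L: "vv n (S \<union> prs n v) = v" "\<not> isfree n (S \<union> prs n v)"
  using vv_upd[OF basic(2), of v "S \<union> prs n v"] basic v_def by auto

lemma lft_vv: assumes "i \<in> Pairs n S" shows "vv n (lft n S i) = v" "\<not> isfree n (lft n S i)"
  using vv_upd[OF L(2), of i "lft n S i"] pi[OF assms] L(1) unfolding lft_def v_def[symmetric]
  by auto

lemma lft_headed: assumes "i \<in> Pairs n S" shows "headed n (lft n S i)"
  using lft_vv[OF assms] pi[OF assms] basic unfolding headed_def lft_def v_def[symmetric]
  by (auto simp: prs_def)

lemma lft_ne: assumes "i \<in> Pairs n S" shows "lft n S i \<noteq> S"
  using pi[OF assms] basic unfolding lft_def v_def[symmetric] by (auto simp: prs_def)

lemma lft_sub: assumes "i \<in> Pairs n S" "S \<subseteq> heis_idx n" shows "lft n S i \<subseteq> heis_idx n"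
  using assms basic unfolding lft_def v_def[symmetric] by (auto simp: prs_def heis_idx_def)

lemma lft_card: assumes "i \<in> Pairs n S" "finite S" shows "card (lft n S i) = card S"
proof -
  have e: "lft n S i = (S - prs n i) \<union> prs n v"
    using pi[OF assms(1)] basic unfolding lft_def v_def[symmetric] by (auto simp: prs_def)
  have d: "(S - prs n i) \<inter> prs n v = {}" using basic by (auto simp: prs_def)
  have s: "prs n i \<subseteq> S" using pi[OF assms(1)] by (auto simp: prs_def)
  have c2: "card (prs n j) = 2" for j using n by (simp add: prs_def)
  have "card S \<ge> 2" using card_mono[OF assms(2) s] c2 by simp
  have fp: "finite (prs n j)" for j by (simp add: prs_def)
  have "card (lft n S i) = card (S - prs n i) + card (prs n v)"
    unfolding e by (rule card_Un_disjoint) (use assms(2) fp d in auto)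
  moreover have "card (S - prs n i) = card S - card (prs n i)"
    by (rule card_Diff_subset[OF fp s])
  ultimately show ?thesis using c2 \<open>card S \<ge> 2\<close> by simp
qed

lemma lft_inj: "inj_on (lft n S) (Pairs n S)"
proof
  fix i j assume ij: "i \<in> Pairs n S" "j \<in> Pairs n S" "lft n S i = lft n S j"
  show "i = j"
  proof (rule ccontr)
    assume ne: "i \<noteq> j"
    have "i \<in> lft n S j" using pi[OF ij(1)] pi[OF ij(2)] ne unfolding lft_def by (auto simp: prs_def)
    moreover have "i \<notin> lft n S i" unfolding lft_def by (auto simp: prs_def)
    ultimately show False using ij(3) by simp
  qed
qed

lemma lft_Pairs: assumes "i \<in> Pairs n S"
  shows "Pairs n (lft n S i) = insert v (Pairs n S - {i})"
  using pi[OF assms] basic unfolding lft_def v_def[symmetric] Pairs_def prs_def by auto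

lemma v_notin_Pairs: "v \<notin> Pairs n S" using basic by (auto simp: Pairs_def)

lemma lft_minus_v: assumes "i \<in> Pairs n S" shows "lft n S i - prs n v = S - prs n i"
  using basic unfolding lft_def v_def[symmetric] by (auto simp: prs_def)

lemma lft_minus: "lft n S i - prs n j = (S \<union> prs n v) - (prs n i \<union> prs n j)"
  unfolding lft_def v_def by auto

lemma core:
  assumes ch: "CHAR('k::field) = 2"
  shows "(ee n S U :: 'k) + (\<Sum>i\<in>Pairs n S. ee n (lft n S i) U) = 0"
proof -
  define P where "P = Pairs n S"
  define ind where "ind W = (if U = insert 0 W then (1::'k) else 0)" for W
  define h where "h i j = ind ((S \<union> prs n v) - (prs n i \<union> prs n j))" for i j
  have eS: "ee n S U = (\<Sum>i\<in>P. ind (S - prs n i))"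
    unfolding P_def ind_def by (rule ee_sum[OF basic(1) n])
  have el: "ee n (lft n S i) U = ind (S - prs n i) + (\<Sum>j\<in>P - {i}. h i j)" if i: "i \<in> P" for i
  proof -
    have z: "0 \<notin> lft n S i" using lft_headed[of i] i P_def headed_def by auto
    have vP: "v \<notin> P - {i}" using v_notin_Pairs P_def by auto
    have "ee n (lft n S i) U = (\<Sum>j\<in>insert v (P - {i}). ind (lft n S i - prs n j))"
      unfolding ee_sum[OF z n] ind_def using lft_Pairs[of i] i P_def by simp
    also have "\<dots> = ind (lft n S i - prs n v) + (\<Sum>j\<in>P - {i}. ind (lft n S i - prs n j))"
      using vP by (simp add: sum.insert P_def)
    also have "\<dots> = ind (S - prs n i) + (\<Sum>j\<in>P - {i}. h i j)"
      using lft_minus_v[of i] i P_def by (simp add: h_def lft_minus)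
    finally show ?thesis .
  qed
  have "(\<Sum>i\<in>P. ee n (lft n S i) U) = (\<Sum>i\<in>P. ind (S - prs n i) + (\<Sum>j\<in>P - {i}. h i j))"
    by (rule sum.cong) (auto simp: el)
  also have "\<dots> = ee n S U + (\<Sum>i\<in>P. \<Sum>j\<in>P - {i}. h i j)"
    by (simp add: sum.distrib eS)
  also have "(\<Sum>i\<in>P. \<Sum>j\<in>P - {i}. h i j) = 0"
    by (rule sym_double_sum[OF ch]) (auto simp: P_def h_def Un_commute)
  finally show ?thesis using char2_double[OF ch] P_def by simp
qed

end



lemma vs: "vector_space (fscale :: 'k::field \<Rightarrow> ('a \<Rightarrow> 'k) \<Rightarrow> ('a \<Rightarrow> 'k))"
  by unfold_locales (auto simp: fscale_def algebra_simps fun_eq_iff)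

lemma fscale_apply: "fscale c f x = c * f x" by (simp add: fscale_def)

lemma biorth:
  fixes g :: "'j \<Rightarrow> ('a \<Rightarrow> 'k::field)" and l :: "'j \<Rightarrow> 'a"
  assumes fin: "finite J"
    and bo: "\<And>j j'. j \<in> J \<Longrightarrow> j' \<in> J \<Longrightarrow> g j' (l j) = (if j' = j then 1 else 0)"
  shows "\<not> module.dependent (fscale::'k \<Rightarrow> _) (g ` J)" "card (g ` J) = card J"
proof -
  interpret vector_space "fscale :: 'k \<Rightarrow> ('a \<Rightarrow> 'k) \<Rightarrow> _" by (rule vs)
  have inj: "inj_on g J"
  proof
    fix j j' assume "j \<in> J" "j' \<in> J" "g j = g j'"
    then have "g j' (l j) = 1" using bo[of j j] by simp
    then show "j = j'" using bo[of j j'] \<open>j \<in> J\<close> \<open>j' \<in> J\<close> by (auto split: if_splits)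
  qed
  then show "card (g ` J) = card J" by (rule card_image)
  show "\<not> dependent (g ` J)"
    unfolding independent_explicit_module
  proof (intro allI impI)
    fix t u w assume t: "finite t" "t \<subseteq> g ` J" "(\<Sum>v\<in>t. fscale (u v) v) = 0" "w \<in> t"
    then obtain j where j: "j \<in> J" "w = g j" by auto
    have "0 = (\<Sum>v\<in>t. fscale (u v) v) (l j)" using t(3) by simp
    also have "\<dots> = (\<Sum>v\<in>t. u v * v (l j))" by (simp add: sum_fun_apply fscale_apply)
    also have "\<dots> = (\<Sum>v\<in>t. if v = w then u v else 0)"
    proof (rule sum.cong)
      fix v assume "v \<in> t"
      then obtain j' where j': "j' \<in> J" "v = g j'" using t(2) by auto
      have "g j' = g j \<longleftrightarrow> j' = j" using inj j j' by (auto dest: inj_onD)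
      then show "u v * v (l j) = (if v = w then u v else 0)" using bo[OF j(1) j'(1)] j j' by auto
    qed simp
    also have "\<dots> = u w" using t(1,4) by simp
    finally show "u w = 0" by simp
  qed
qed

lemma dim_biorth:
  fixes g :: "'j \<Rightarrow> ('a \<Rightarrow> 'k::field)" and l :: "'j \<Rightarrow> 'a"
  assumes fin: "finite J"
    and bo: "\<And>j j'. j \<in> J \<Longrightarrow> j' \<in> J \<Longrightarrow> g j' (l j) = (if j' = j then 1 else 0)"
    and sub: "g ` J \<subseteq> V" and sp: "V \<subseteq> module.span (fscale::'k \<Rightarrow> _) (g ` J)"
  shows "vector_space.dim (fscale::'k \<Rightarrow> _) V = card J"
proof -
  interpret vector_space "fscale :: 'k \<Rightarrow> ('a \<Rightarrow> 'k) \<Rightarrow> _" by (rule vs)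
  show ?thesis using dim_unique[OF sub sp biorth(1)[of J g l, OF fin bo] biorth(2)[of J g l, OF fin bo]] by simp
qed

lemma finite_ce_basis: "finite (ce_basis n q)"
  unfolding ce_basis_def heis_idx_def
  by (rule finite_subset[of _ "Pow {0..2*n}"]) auto

lemma ce_basis_finite_mem: "S \<in> ce_basis n q \<Longrightarrow> finite S"
  unfolding ce_basis_def heis_idx_def by (auto intro: finite_subset)

lemma ce_d_ee:
  assumes ch: "CHAR('k::field) = 2" and n: "n \<ge> 1"
  shows "(ce_d n q f :: nat set \<Rightarrow> 'k) = (\<lambda>U. \<Sum>S\<in>ce_basis n q. f S * ee n S U)"
  unfolding ce_d_def
  by (intro ext sum.cong refl) (simp add: ce_d_basis_char2[OF ch n ce_basis_finite_mem])

lemma ce_d_ind: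
  assumes ch: "CHAR('k::field) = 2" and n: "n \<ge> 1" and F: "F \<subseteq> ce_basis n q"
  shows "(ce_d n q (\<lambda>W. if W \<in> F then 1 else 0) :: nat set \<Rightarrow> 'k) = (\<lambda>U. \<Sum>S\<in>F. ee n S U)"
proof
  fix U
  have "(ce_d n q (\<lambda>W. if W \<in> F then 1 else 0) :: nat set \<Rightarrow> 'k) U =
     (\<Sum>S\<in>ce_basis n q. if S \<in> F then ee n S U else 0)"
    unfolding ce_d_ee[OF ch n] by (intro sum.cong) auto
  also have "\<dots> = (\<Sum>S\<in>F. ee n S U)"
    using F finite_ce_basis[of n q] by (simp add: sum.inter_restrict[symmetric] Int_absorb1)
  finally show "(ce_d n q (\<lambda>W. if W \<in> F then 1 else 0) :: nat set \<Rightarrow> 'k) U = (\<Sum>S\<in>F. ee n S U)" .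
qed

lemma ce_d_add: "ce_d n q (f + g) = ce_d n q f + ce_d n q g"
  by (auto simp: ce_d_def fun_eq_iff sum.distrib algebra_simps)

lemma ce_d_scale: "ce_d n q (fscale c f) = fscale c (ce_d n q f)"
  by (auto simp: ce_d_def fun_eq_iff fscale_def sum_distrib_left algebra_simps)

lemma ce_d_zero: "ce_d n q 0 = 0"
  by (auto simp: ce_d_def fun_eq_iff)

lemma ce_d_diff: "ce_d n q (f - g) = ce_d n q f - ce_d n q g"
  by (auto simp: ce_d_def fun_eq_iff sum_subtractf algebra_simps)

lemma ce_d_sum: "ce_d n q (\<Sum>x\<in>A. f x) = (\<Sum>x\<in>A. ce_d n q (f x))"
proof (induction A rule: infinite_finite_induct)
  case (infinite A) then show ?case by (metis sum.infinite ce_d_zero)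
next
  case empty then show ?case by (simp only: sum.empty ce_d_zero)
next
  case (insert x F) then show ?case by (simp only: sum.insert[OF insert.hyps] ce_d_add insert.IH)
qed



definition TT :: "nat \<Rightarrow> nat \<Rightarrow> nat set set" where
  "TT n q = {T \<in> ce_basis n q. headed n T}"

definition gg :: "nat \<Rightarrow> nat set \<Rightarrow> nat set \<Rightarrow> 'k::field" where
  "gg n S = (\<lambda>W. if W \<in> insert S (lft n S ` Pairs n S) then 1 else 0)"

definition kk :: "nat \<Rightarrow> nat set \<Rightarrow> nat set \<Rightarrow> 'k::field" where
  "kk n S = (if nh n S then gg n S else (\<lambda>W. if W \<in> {S} then 1 else 0))"

lemma finite_TT: "finite (TT n q)"
  unfolding TT_def by (rule finite_subset[OF _ finite_ce_basis]) auto

lemma classify: "0 \<in> S \<or> isfree n S \<or> headed n S \<or> nh n S"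
  unfolding headed_def nh_def by auto

lemma lft_in_TT:
  assumes "n \<ge> 1" "nh n S" "S \<in> ce_basis n q" "i \<in> Pairs n S"
  shows "lft n S i \<in> TT n q"
proof -
  interpret nhS n S using assms by unfold_locales
  show ?thesis using assms lft_headed lft_sub lft_card ce_basis_finite_mem[OF assms(3)]
    unfolding TT_def ce_basis_def by auto
qed

lemma ee_nh_eq:
  assumes ch: "CHAR('k::field) = 2" and "n \<ge> 1" "nh n S"
  shows "(ee n S :: nat set \<Rightarrow> 'k) = - (\<Sum>i\<in>Pairs n S. ee n (lft n S i))"
proof
  interpret nhS n S using assms by unfold_locales
  fix U
  have "(ee n S U :: 'k) + (\<Sum>i\<in>Pairs n S. ee n (lft n S i) U) = 0" by (rule core[OF ch])
  then show "(ee n S U :: 'k) = (- (\<Sum>i\<in>Pairs n S. ee n (lft n S i))) U"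
    by (simp add: sum_fun_apply eq_neg_iff_add_eq_0)
qed

lemma dim_im:
  assumes ch: "CHAR('k::field) = 2" and n: "n \<ge> 1"
  shows "vector_space.dim (fscale :: 'k \<Rightarrow> _) (ce_d n q ` (ce_chains n q :: (nat set \<Rightarrow> 'k) set)) = card (TT n q)"
proof -
  interpret vector_space "fscale :: 'k \<Rightarrow> (nat set \<Rightarrow> 'k) \<Rightarrow> _" by (rule vs)
  show ?thesis
  proof (rule dim_biorth[where g = "ee n" and l = "ll n"])
    show "finite (TT n q)" by (rule finite_TT)
    show "(ee n T' (ll n T) :: 'k) = (if T' = T then 1 else 0)" if "T \<in> TT n q" "T' \<in> TT n q" for T T'
      using that unfolding TT_def by (intro headed_tri[OF _ _ n]) auto
    show "(ee n ` TT n q :: (nat set \<Rightarrow> 'k) set) \<subseteq> ce_d n q ` ce_chains n q"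
    proof
      fix x assume "x \<in> (ee n ` TT n q :: (nat set \<Rightarrow> 'k) set)"
      then obtain T where T: "T \<in> TT n q" "x = ee n T" by auto
      have sub: "{T} \<subseteq> ce_basis n q" using T by (auto simp: TT_def)
      have "x = ce_d n q (\<lambda>W. if W \<in> {T} then 1 else 0)"
        using ce_d_ind[OF ch n sub] T by simp
      moreover have "(\<lambda>W. if W \<in> {T} then 1 else (0::'k)) \<in> ce_chains n q"
        using sub by (auto simp: ce_chains_def)
      ultimately show "x \<in> ce_d n q ` ce_chains n q" by blast
    qed
    have eesp: "ee n S \<in> span (ee n ` TT n q)" if S: "S \<in> ce_basis n q" for S
    proof -
      consider "0 \<in> S \<or> isfree n S" | "headed n S" | "nh n S" using classify by blast
      then show ?thesis
      proof cases
        case 1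
        then have "(ee n S :: nat set \<Rightarrow> 'k) = 0" using ee_zero[of S n] by (simp add: zero_fun_def)
        then show ?thesis using span_zero by simp
      next
        case 2
        then show ?thesis using S by (intro span_base) (auto simp: TT_def)
      next
        case 3
        show ?thesis unfolding ee_nh_eq[OF ch n 3]
          by (intro span_neg span_sum span_base imageI lft_in_TT[OF n 3 S])
      qed
    qed
    show "ce_d n q ` ce_chains n q \<subseteq> span (ee n ` TT n q)"
    proof
      fix x assume "x \<in> ce_d n q ` (ce_chains n q :: (nat set \<Rightarrow> 'k) set)"
      then obtain f where f: "x = ce_d n q f" by auto
      have "x = (\<Sum>S\<in>ce_basis n q. fscale (f S) (ee n S))"
        unfolding f ce_d_ee[OF ch n] by (simp add: fun_eq_iff sum_fun_apply fscale_apply)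
      also have "\<dots> \<in> span (ee n ` TT n q)"
        by (intro span_sum span_scale eesp)
      finally show "x \<in> span (ee n ` TT n q)" .
    qed
  qed
qed



lemma kk_support:
  assumes "(kk n S W :: 'k::field) \<noteq> 0"
  shows "W = S \<or> (nh n S \<and> (\<exists>i\<in>Pairs n S. W = lft n S i))"
  using assms by (auto simp: kk_def gg_def split: if_splits)

lemma kk_self: "(kk n S S :: 'k::field) = 1"
  by (auto simp: kk_def gg_def)

lemma kk_bo:
  assumes n: "n \<ge> 1" and S: "S \<in> ce_basis n q - TT n q" and S': "S' \<in> ce_basis n q - TT n q"
  shows "(kk n S' S :: 'k::field) = (if S' = S then 1 else 0)"
proof (cases "S' = S")
  case True then show ?thesis by (simp add: kk_self)
next
  case False
  show ?thesis
  proof (rule ccontr)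
    assume "(kk n S' S :: 'k) \<noteq> (if S' = S then 1 else 0)"
    then have "(kk n S' S :: 'k) \<noteq> 0" using False by simp
    then obtain i where i: "nh n S'" "i \<in> Pairs n S'" "S = lft n S' i"
      using kk_support[of n S' S] False by auto
    have "S \<in> TT n q" using lft_in_TT[OF n i(1) _ i(2)] S' i(3) by auto
    then show False using S by auto
  qed
qed

lemma kk_chain:
  assumes n: "n \<ge> 1" and S: "S \<in> ce_basis n q"
  shows "(kk n S :: nat set \<Rightarrow> 'k::field) \<in> ce_chains n q"
  unfolding ce_chains_def
proof (intro CollectI allI impI)
  fix W assume "(kk n S W :: 'k) \<noteq> 0"
  then show "W \<in> ce_basis n q" using kk_support[of n S W] lft_in_TT[OF n _ S] S
    by (auto simp: TT_def)
qed

lemma kk_closed: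
  assumes ch: "CHAR('k::field) = 2" and n: "n \<ge> 1" and S: "S \<in> ce_basis n q - TT n q"
  shows "ce_d n q (kk n S :: nat set \<Rightarrow> 'k) = 0"
proof (cases "nh n S")
  case True
  interpret nhS n S using n True by unfold_locales
  have sub: "insert S (lft n S ` Pairs n S) \<subseteq> ce_basis n q"
    using S lft_in_TT[OF n True] by (auto simp: TT_def)
  have notin: "S \<notin> lft n S ` Pairs n S" using lft_ne by auto
  show ?thesis
  proof
    fix U
    have "ce_d n q (kk n S :: nat set \<Rightarrow> 'k) U = (\<Sum>W\<in>insert S (lft n S ` Pairs n S). ee n W U)"
      using ce_d_ind[OF ch n sub] True by (simp add: kk_def gg_def)
    also have "\<dots> = ee n S U + (\<Sum>W\<in>lft n S ` Pairs n S. ee n W U)"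
      using notin by (simp add: sum.insert)
    also have "(\<Sum>W\<in>lft n S ` Pairs n S. (ee n W U :: 'k)) = (\<Sum>i\<in>Pairs n S. ee n (lft n S i) U)"
      by (simp add: sum.reindex[OF lft_inj])
    also have "(ee n S U :: 'k) + \<dots> = 0" by (rule core[OF ch])
    finally show "ce_d n q (kk n S :: nat set \<Rightarrow> 'k) U = 0 U" by simp
  qed
next
  case False
  then have z: "0 \<in> S \<or> isfree n S" using S classify[of S n] by (auto simp: TT_def)
  have sub: "{S} \<subseteq> ce_basis n q" using S by auto
  show ?thesis
    using ce_d_ind[OF ch n sub] False ee_zero[OF z] by (simp add: kk_def zero_fun_def)
qed

lemma dim_ker:
  assumes ch: "CHAR('k::field) = 2" and n: "n \<ge> 1"
  shows "vector_space.dim (fscale :: 'k \<Rightarrow> _) {f \<in> (ce_chains n q :: (nat set \<Rightarrow> 'k) set). ce_d n q f = 0}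
     = card (ce_basis n q - TT n q)"
proof -
  interpret vector_space "fscale :: 'k \<Rightarrow> (nat set \<Rightarrow> 'k) \<Rightarrow> _" by (rule vs)
  define J where "J = ce_basis n q - TT n q"
  have finJ: "finite J" unfolding J_def using finite_ce_basis by auto
  show ?thesis unfolding J_def[symmetric]
  proof (rule dim_biorth[where g = "kk n" and l = "\<lambda>x. x"])
    show "finite J" by (rule finJ)
    show "(kk n S' S :: 'k) = (if S' = S then 1 else 0)" if "S \<in> J" "S' \<in> J" for S S'
      by (rule kk_bo[OF n]) (use that J_def in auto)
    show "(kk n ` J :: (nat set \<Rightarrow> 'k) set) \<subseteq> {f \<in> ce_chains n q. ce_d n q f = 0}"
      using kk_chain[OF n] kk_closed[OF ch n] J_def by auto
    show "{f \<in> (ce_chains n q :: (nat set \<Rightarrow> 'k) set). ce_d n q f = 0} \<subseteq> span (kk n ` J)"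
    proof
      fix f :: "nat set \<Rightarrow> 'k"
      assume "f \<in> {f \<in> ce_chains n q. ce_d n q f = 0}"
      then have fc: "f \<in> ce_chains n q" and f0: "ce_d n q f = 0" by auto
      define r where "r = f - (\<Sum>S\<in>J. fscale (f S) (kk n S))"
      have rJ: "r W = 0" if "W \<in> J" for W
      proof -
        have "(\<Sum>S\<in>J. fscale (f S) (kk n S :: nat set \<Rightarrow> 'k)) W = (\<Sum>S\<in>J. if S = W then f S else 0)"
          unfolding sum_fun_apply fscale_apply
        proof (rule sum.cong)
          fix S assume S: "S \<in> J"
          have "(kk n S W :: 'k) = (if S = W then 1 else 0)"
            by (rule kk_bo[OF n]) (use S that J_def in auto)
          then show "f S * kk n S W = (if S = W then f S else 0)" by simp
        qed simp
        also have "\<dots> = f W" using that finJ by simp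
        finally show ?thesis by (simp add: r_def)
      qed
      have rB: "r W = 0" if "W \<notin> ce_basis n q" for W
      proof -
        have "f W = 0" using fc that by (auto simp: ce_chains_def)
        moreover have "(kk n S W :: 'k) = 0" if "S \<in> J" for S
          using kk_chain[OF n, of S q] that \<open>W \<notin> ce_basis n q\<close> J_def by (auto simp: ce_chains_def)
        ultimately show ?thesis by (simp add: r_def sum_fun_apply fscale_apply)
      qed
      have rT: "r W \<noteq> 0 \<Longrightarrow> W \<in> TT n q" for W using rJ rB J_def by blast
      have fz: "fscale c (0 :: nat set \<Rightarrow> 'k) = 0" for c by (simp add: fscale_def zero_fun_def)
      have "ce_d n q r = ce_d n q f - (\<Sum>S\<in>J. fscale (f S) (ce_d n q (kk n S)))"
        unfolding r_def ce_d_diff ce_d_sum ce_d_scale ..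
      also have "(\<Sum>S\<in>J. fscale (f S) (ce_d n q (kk n S :: nat set \<Rightarrow> 'k))) = 0"
      proof (rule sum.neutral, rule ballI)
        fix S assume "S \<in> J"
        then have "ce_d n q (kk n S :: nat set \<Rightarrow> 'k) = 0" using kk_closed[OF ch n] J_def by blast
        then show "fscale (f S) (ce_d n q (kk n S :: nat set \<Rightarrow> 'k)) = 0" by (simp add: fz)
      qed
      finally have "ce_d n q r = ce_d n q f - 0" .
      then have dr: "ce_d n q r = 0" by (simp only: f0 diff_zero)
      have r0: "r T = 0" if T: "T \<in> TT n q" for T
      proof -
        have "0 = ce_d n q r (ll n T)" using dr by simp
        also have "\<dots> = (\<Sum>W\<in>ce_basis n q. r W * ee n W (ll n T))" by (simp add: ce_d_ee[OF ch n])
        also have "\<dots> = (\<Sum>W\<in>ce_basis n q. if W = T then r W else 0)"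
        proof (rule sum.cong)
          fix W assume W: "W \<in> ce_basis n q"
          show "r W * ee n W (ll n T) = (if W = T then r W else 0)"
          proof (cases "r W = 0")
            case False
            then have "W \<in> TT n q" by (rule rT)
            then have "(ee n W (ll n T) :: 'k) = (if W = T then 1 else 0)"
              by (intro headed_tri[OF _ _ n]) (use T in \<open>auto simp: TT_def\<close>)
            then show ?thesis by simp
          qed auto
        qed simp
        also have "\<dots> = r T" using T finite_ce_basis by (auto simp: TT_def)
        finally show ?thesis by simp
      qed
      have "r = 0"
      proof
        fix W show "r W = 0 W"
          using r0 rT by (cases "r W = 0") auto
      qed
      then have "f = (\<Sum>S\<in>J. fscale (f S) (kk n S))" unfolding r_def by simp
      also have "\<dots> \<in> span (kk n ` J)"
        by (intro span_sum span_scale span_base imageI)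
      finally show "f \<in> span (kk n ` J)" .
    qed
  qed
qed



lemma card_ce_basis: "card (ce_basis n q) = (2*n+1) choose q"
  unfolding ce_basis_def heis_idx_def by (simp add: n_subsets)

lemma TT_small: assumes n: "n \<ge> 1" and q: "q < 2" shows "TT n q = {}"
proof (rule ccontr)
  assume "TT n q \<noteq> {}"
  then obtain T where T: "T \<in> ce_basis n q" "headed n T" by (auto simp: TT_def)
  have "prs n (vv n T) \<subseteq> T" using headed_props[OF T(2)] by simp
  then have "card (prs n (vv n T)) \<le> card T" using ce_basis_finite_mem[OF T(1)] by (rule card_mono[rotated])
  moreover have "card (prs n (vv n T)) = 2" using n by (simp add: prs_def)
  ultimately show False using T(1) q by (auto simp: ce_basis_def)
qed

definition B0 :: "nat \<Rightarrow> nat \<Rightarrow> nat set set" where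
  "B0 n q = {S \<in> ce_basis n q. 0 \<notin> S}"
definition FR :: "nat \<Rightarrow> nat \<Rightarrow> nat set set" where
  "FR n q = {S \<in> B0 n q. isfree n S}"
definition NH :: "nat \<Rightarrow> nat \<Rightarrow> nat set set" where
  "NH n q = {S \<in> ce_basis n q. nh n S}"

lemma sub_iff0: "(S \<subseteq> {0..2*(n::nat)} \<and> 0 \<notin> S) = (S \<subseteq> {1..2*n})"
proof
  assume a: "S \<subseteq> {0..2*n} \<and> 0 \<notin> S"
  show "S \<subseteq> {1..2*n}"
  proof
    fix x assume x: "x \<in> S"
    have "x \<le> 2*n" using a x by auto
    moreover have "x \<noteq> 0"
    proof
      assume "x = 0" then show False using a x by simp
    qed
    ultimately
    show "x \<in> {1..2*n}" by simp
  qed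
next
  assume "S \<subseteq> {1..2*n}"
  then show "S \<subseteq> {0..2*n} \<and> 0 \<notin> S" by auto
qed

lemma card_B0: "card (B0 n q) = (2*n) choose q"
proof -
  have "B0 n q = {S. S \<subseteq> {1..2*n} \<and> card S = q}"
    unfolding B0_def ce_basis_def heis_idx_def using sub_iff0 by blast
  then show ?thesis by (simp add: n_subsets)
qed

lemma card_NH: assumes n: "n \<ge> 1" shows "card (NH n q) = card (TT n (q+2))"
proof -
  define L where "L S = S \<union> prs n (vv n S)" for S
  define R where "R T = T - prs n (vv n T)" for T
  have "bij_betw L (NH n q) (TT n (q+2))"
  proof (rule bij_betw_byWitness[where f' = R])
    show "\<forall>a\<in>NH n q. R (L a) = a"
    proof
      fix S assume S: "S \<in> NH n q"
      interpret nhS n S using n S by unfold_locales (auto simp: NH_def)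
      show "R (L S) = S" using L basic unfolding R_def L_def v_def by (auto simp: prs_def)
    qed
    show "\<forall>a'\<in>TT n (q+2). L (R a') = a'"
    proof
      fix T assume T: "T \<in> TT n (q+2)"
      then have h: "headed n T" by (auto simp: TT_def)
      have "vv n (R T) = vv n T"
        using vv_upd(1)[OF headed_props(3)[OF h], of "vv n T" "R T"] vv_props[OF headed_props(3)[OF h]]
        unfolding R_def by auto
      then show "L (R T) = T" using headed_props(2)[OF h] unfolding L_def R_def by auto
    qed
    show "L ` NH n q \<subseteq> TT n (q+2)"
    proof
      fix x assume "x \<in> L ` NH n q"
      then obtain S where S: "S \<in> NH n q" "x = L S" by auto
      interpret nhS n S using n S by unfold_locales (auto simp: NH_def)
      have fin: "finite S" using S ce_basis_finite_mem by (auto simp: NH_def)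
      have c: "card (S \<union> prs n v) = card S + 2"
        using basic n fin by (simp add: prs_def)
      have "headed n (S \<union> prs n v)" using L basic unfolding headed_def by (auto simp: prs_def)
      then show "x \<in> TT n (q+2)" using S c basic unfolding L_def v_def[symmetric]
        by (auto simp: TT_def NH_def ce_basis_def prs_def heis_idx_def)
    qed
    show "R ` TT n (q+2) \<subseteq> NH n q"
    proof
      fix x assume "x \<in> R ` TT n (q+2)"
      then obtain T where T: "T \<in> TT n (q+2)" "x = R T" by auto
      then have h: "headed n T" and Tb: "T \<in> ce_basis n (q+2)" by (auto simp: TT_def)
      note HP = headed_props[OF h]
      have vr: "vv n (R T) = vv n T" "\<not> isfree n (R T)"
        using vv_upd[OF HP(3), of "vv n T" "R T"] vv_props[OF HP(3)]
        unfolding R_def by auto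
      have "nh n (R T)" using vr HP unfolding nh_def R_def by (auto simp: prs_def)
      moreover have "card (R T) = q"
      proof -
        have "card (R T) = card T - card (prs n (vv n T))"
          unfolding R_def by (rule card_Diff_subset) (use HP in \<open>auto simp: prs_def\<close>)
        then show ?thesis using Tb n by (simp add: ce_basis_def prs_def)
      qed
      moreover have "R T \<subseteq> heis_idx n" using Tb unfolding R_def ce_basis_def by auto
      ultimately show "x \<in> NH n q" using T by (auto simp: NH_def ce_basis_def)
    qed
  qed
  then show ?thesis by (rule bij_betw_same_card)
qed

definition phi :: "nat \<Rightarrow> nat set \<Rightarrow> nat set" where
  "phi n A = A \<union> (\<lambda>i. i + n) ` ({1..n} - A)"

lemma free_count:
  "card {S. S \<subseteq> {1..2*n} \<and> isfree n S} = 2 ^ n"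
  "S \<subseteq> {1..2*n} \<Longrightarrow> isfree n S \<Longrightarrow> card S = n"
proof -
  have bij: "bij_betw (phi n) (Pow {1..n}) {S. S \<subseteq> {1..2*n} \<and> isfree n S}"
  proof (rule bij_betw_byWitness[where f' = "\<lambda>S. S \<inter> {1..n}"])
    show "\<forall>a\<in>Pow {1..n}. phi n a \<inter> {1..n} = a" by (auto simp: phi_def)
    show "\<forall>a'\<in>{S. S \<subseteq> {1..2*n} \<and> isfree n S}. phi n (a' \<inter> {1..n}) = a'"
    proof
      fix S assume S: "S \<in> {S. S \<subseteq> {1..2*n} \<and> isfree n S}"
      show "phi n (S \<inter> {1..n}) = S"
      proof
        show "phi n (S \<inter> {1..n}) \<subseteq> S"
        proof
          fix x assume "x \<in> phi n (S \<inter> {1..n})"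
          then consider "x \<in> S" | i where "i \<in> {1..n}" "i \<notin> S" "x = i + n" unfolding phi_def by blast
          then show "x \<in> S"
          proof cases
            case 2 then show ?thesis using S by (auto simp: isfree_def bal_def)
          qed
        qed
        show "S \<subseteq> phi n (S \<inter> {1..n})"
        proof
          fix x assume x: "x \<in> S"
          show "x \<in> phi n (S \<inter> {1..n})"
          proof (cases "x \<le> n")
            case True then show ?thesis using x S by (auto simp: phi_def)
          next
            case False
            have "x \<le> 2*n" using x S by auto
            then have i: "x = (x - n) + n" "1 \<le> x - n" "x - n \<le> n" using False by auto
            define i where "i = x - n"
            note i = i[folded i_def]
            then have "i \<notin> S" using S x by (auto simp: isfree_def bal_def)
            then show ?thesis using i by (auto simp: phi_def)
          qed
        qed
      qed
    qed
    show "phi n ` Pow {1..n} \<subseteq> {S. S \<subseteq> {1..2*n} \<and> isfree n S}"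
      by (auto simp: phi_def isfree_def bal_def)
    show "(\<lambda>S. S \<inter> {1..n}) ` {S. S \<subseteq> {1..2*n} \<and> isfree n S} \<subseteq> Pow {1..n}" by auto
  qed
  show "card {S. S \<subseteq> {1..2*n} \<and> isfree n S} = 2 ^ n"
    using bij_betw_same_card[OF bij] by (simp add: card_Pow)
  assume S: "S \<subseteq> {1..2*n}" "isfree n S"
  have "S \<in> {S. S \<subseteq> {1..2*n} \<and> isfree n S}" using S by simp
  then have "S \<in> phi n ` Pow {1..n}" using bij unfolding bij_betw_def by simp
  then obtain A where A0: "A \<in> Pow {1..n}" and A1: "S = phi n A" by (rule imageE)
  have A: "A \<subseteq> {1..n}" "S = phi n A" using A0 A1 by auto
  have d: "A \<inter> (\<lambda>i. i + n) ` ({1..n} - A) = {}" using A by auto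
  have "card S = card A + card ((\<lambda>i. i + n) ` ({1..n} - A))"
    unfolding A(2) phi_def by (rule card_Un_disjoint) (use A(1) d in \<open>auto intro: finite_subset\<close>)
  also have "card ((\<lambda>i. i + n) ` ({1..n} - A)) = card ({1..n} - A)"
    by (rule card_image) (auto simp: inj_on_def)
  also have "\<dots> = n - card A" using A(1) by (simp add: card_Diff_subset finite_subset)
  finally show "card S = n" using card_mono[OF _ A(1)] by simp
qed

lemma card_FR: "card (FR n q) = (if q = n then 2 ^ n else 0)"
proof -
  have e: "FR n q = {S. S \<subseteq> {1..2*n} \<and> isfree n S \<and> card S = q}"
    unfolding FR_def B0_def ce_basis_def heis_idx_def using sub_iff0 by blast
  show ?thesis
  proof (cases "q = n")
    case True
    then have "FR n q = {S. S \<subseteq> {1..2*n} \<and> isfree n S}" unfolding e using free_count(2) by auto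
    then show ?thesis using True free_count(1) by simp
  next
    case False
    then have "FR n q = {}" unfolding e using free_count(2) by auto
    then show ?thesis using False by simp
  qed
qed

lemma TT_rel: assumes n: "n \<ge> 1"
  shows "card (TT n q) + card (TT n (q+2)) + (if q = n then 2 ^ n else 0) = (2*n) choose q"
proof -
  have e: "B0 n q = TT n q \<union> FR n q \<union> NH n q"
    unfolding B0_def TT_def FR_def NH_def using classify by (auto simp: headed_def nh_def)
  have fin: "finite (B0 n q)" unfolding B0_def using finite_ce_basis by auto
  have f1: "finite (TT n q)" "finite (FR n q)" "finite (NH n q)"
    using fin e by (auto intro: finite_subset)
  have d1: "TT n q \<inter> FR n q = {}" "(TT n q \<union> FR n q) \<inter> NH n q = {}"
    unfolding TT_def FR_def NH_def B0_def headed_def nh_def by auto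
  have "card (B0 n q) = card (TT n q) + card (FR n q) + card (NH n q)"
    unfolding e using f1 d1 by (simp add: card_Un_disjoint)
  then show ?thesis using card_B0 card_FR card_NH[OF n] by simp
qed



lemma binom_fps: "fps_nth ((1 + fps_X) ^ m :: real fps) k = real (m choose k)"
  by (simp add: fps_binomial_of_nat[symmetric] binomial_gbinomial)

theorem mainTheorem1:
  fixes n :: nat
  assumes "CHAR('k::field) = 2" and "n \<ge> 1"
  shows "Abs_fps (\<lambda>i. real (heis_homology_dim TYPE('k) n i)) =
    ((1 + fps_X ^ 3) * (1 + fps_X) ^ (2 * n) + (fps_X + fps_X ^ 2) * (fps_const 2 * fps_X) ^ n)
      / (1 + fps_X ^ 2)"
proof -
  note ch = assms(1) and n = assms(2)
  define t where "t q = card (TT n q)" for q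
  have tle: "t q \<le> ((2*n+1) choose q)" for q
    unfolding t_def card_ce_basis[symmetric] by (rule card_mono[OF finite_ce_basis]) (auto simp: TT_def)
  have hd: "heis_homology_dim TYPE('k) n i = (((2*n+1) choose i) - t i) - t (Suc i)" for i
  proof -
    have "card (ce_basis n i - TT n i) = card (ce_basis n i) - card (TT n i)"
      by (rule card_Diff_subset[OF finite_TT]) (auto simp: TT_def)
    then show ?thesis
      unfolding heis_homology_dim_def dim_ker[OF ch n] dim_im[OF ch n] t_def card_ce_basis by simp
  qed
  have rel: "t q + t (q+2) + (if q = n then 2 ^ n else 0) = (2*n) choose q" for q
    unfolding t_def by (rule TT_rel[OF n])
  have t0: "t 0 = 0" "t 1 = 0" unfolding t_def using TT_small[OF n] by auto
  have bound: "t i + t (Suc i) \<le> ((2*n+1) choose i)" for i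
  proof (cases i)
    case 0 then show ?thesis using t0 by simp
  next
    case (Suc j)
    have "t (Suc j) \<le> ((2*n) choose (Suc j))" using rel[of "Suc j"] by linarith
    moreover have "t (Suc (Suc j)) \<le> ((2*n) choose j)" using rel[of j] by simp
    moreover have "((2*n+1) choose (Suc j)) = ((2*n) choose j) + ((2*n) choose (Suc j))" by simp
    ultimately show ?thesis using Suc by simp
  qed
  have hdr: "real (heis_homology_dim TYPE('k) n i) = real ((2*n+1) choose i) - real (t i) - real (t (Suc i))" for i
    using bound[of i] unfolding hd by (simp add: of_nat_diff)
  define X where "X = (fps_X :: real fps)"
  define tt where "tt = Abs_fps (\<lambda>q. real (t q))"
  define ts where "ts = Abs_fps (\<lambda>q. real (t (Suc q)))"
  define M where "M = (1 + X) ^ (2*n) - (fps_const 2 * X) ^ n"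
  have LHS: "Abs_fps (\<lambda>i. real (heis_homology_dim TYPE('k) n i)) = (1 + X) ^ (2*n+1) - tt - ts"
  proof (rule fps_ext)
    fix i
    have b1: "fps_nth ((1 + X) ^ (2*n+1)) i = real ((2*n+1) choose i)"
      unfolding X_def by (rule binom_fps)
    show "fps_nth (Abs_fps (\<lambda>i. real (heis_homology_dim TYPE('k) n i))) i = fps_nth ((1 + X) ^ (2*n+1) - tt - ts) i"
      by (simp only: fps_sub_nth b1 fps_nth_Abs_fps tt_def ts_def hdr)
  qed
  have Xts: "X * ts = tt"
    by (rule fps_ext) (auto simp: X_def ts_def tt_def t0)
  have Mc: "fps_nth M j = real ((2*n) choose j) - (if j = n then 2 ^ n else 0)" for j
    by (simp add: M_def X_def binom_fps power_mult_distrib fps_X_power_nth)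
  have relt: "(1 + X^2) * tt = X^2 * M"
  proof (rule fps_ext)
    fix k
    have l: "fps_nth ((1 + X^2) * tt) k = real (t k) + (if k < 2 then 0 else real (t (k - 2)))"
      by (simp add: distrib_right X_def fps_X_power_mult_nth tt_def)
    have r: "fps_nth (X^2 * M) k = (if k < 2 then 0 else fps_nth M (k - 2))"
      by (simp add: X_def fps_X_power_mult_nth)
    show "fps_nth ((1 + X^2) * tt) k = fps_nth (X^2 * M) k"
    proof (cases "k < 2")
      case True
      then have "k = 0 \<or> k = 1" by auto
      then show ?thesis unfolding l r using t0 by auto
    next
      case False
      then obtain j where j: "k = j + 2" by (metis add.commute le_Suc_ex not_less)
      have "real (t j) + real (t (j+2)) + (if j = n then 2 ^ n else 0) = real ((2*n) choose j)"
        using arg_cong[OF rel[of j], of real] by (cases "j = n") (simp_all add: of_nat_add)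
      then show ?thesis unfolding l r Mc using j by simp
    qed
  qed
  have Xnz: "X \<noteq> 0" by (simp add: X_def)
  have relts: "(1 + X^2) * ts = X * M"
  proof -
    have "X * ((1 + X^2) * ts) = X * (X * M)"
      using relt Xts by (simp add: power2_eq_square algebra_simps)
    then show ?thesis using Xnz by simp
  qed
  define D where "D = (1 + X^2)"
  have D0: "fps_nth D 0 \<noteq> 0" by (simp add: D_def X_def)
  have key: "((1 + X) ^ (2*n+1) - tt - ts) * D =
     (1 + X ^ 3) * (1 + X) ^ (2 * n) + (X + X ^ 2) * (fps_const 2 * X) ^ n"
  proof -
    have "((1 + X) ^ (2*n+1) - tt - ts) * D = (1 + X) ^ (2*n+1) * D - (1 + X^2) * tt - (1 + X^2) * ts"
      unfolding D_def by (simp add: algebra_simps)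
    also have "\<dots> = (1 + X) * (1 + X) ^ (2*n) * (1 + X^2) - X^2 * M - X * M"
      unfolding relt relts D_def by simp
    also have "\<dots> = (1 + X ^ 3) * (1 + X) ^ (2 * n) + (X + X ^ 2) * (fps_const 2 * X) ^ n"
      unfolding M_def by (simp add: algebra_simps power2_eq_square power3_eq_cube)
    finally show ?thesis .
  qed
  have "((1 + X ^ 3) * (1 + X) ^ (2 * n) + (X + X ^ 2) * (fps_const 2 * X) ^ n) / D
      = ((1 + X) ^ (2*n+1) - tt - ts) * D * inverse D"
    unfolding key[symmetric] by (rule fps_divide_unit[OF D0])
  also have "\<dots> = (1 + X) ^ (2*n+1) - tt - ts"
    using inverse_mult_eq_1'[OF D0] by (simp add: mult.assoc)
  finally show ?thesis unfolding LHS by (simp add: X_def D_def)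
qed


end
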